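(* Let $\tilde\omega$ be the normal Cartan connection (the unique adapted Cartan connection whose curvature function takes values in $\tilde N$), let $(X_1,X_2)$ be an oriented orthonormal frame on $U$ with associated $X_3$, structure functions $c,c^2_{13},c^1_{23},c^1_{12},c^2_{12}$ and dual coframe $(\theta_1,\theta_2,\theta_3)$, and let $s=(X_1,X_2)$ be the corresponding section. Then $s^*\tilde\omega=e_1\otimes\theta_1+e_2\otimes\theta_2+e_3\otimes\theta_3+e_4\otimes(\beta_1\theta_1+\beta_2\theta_2+\beta_3\theta_3)$ with $\beta_1=c^1_{12}$, $\beta_2=-c^2_{12}$, $\beta_3=(c^2_{12})^2-(c^1_{12})^2-X_1(c^2_{12})-X_2(c^1_{12})$, and the pulled back curvature $\Omega=d\omega+\frac12[\omega,\omega]$, $\omega=s^*\tilde\omega$, has components $\Omega_1=-c\,\theta_1\wedge\theta_3-(c^1_{23}+\beta_3)\theta_2\wedge\theta_3$, $\Omega_2=-(c^2_{13}+\beta_3)\theta_1\wedge\theta_3+c\,\theta_2\wedge\theta_3$, $\Omega_3=0$ (where $\Omega=\sum_ie_i\otimes\Omega_i$).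
   Context: Setting: 3-dimensional ts-oriented contact sub-Lorentzian manifold $(M,H,g)$. Oriented orthonormal frame: $g(X_1,X_1)=-1$, $g(X_1,X_2)=0$, $g(X_2,X_2)=1$, orientation compatible. With $\eta$ the contact form vanishing on $H$ and $\eta([X_2,X_1])=1$, $X_3$ is defined by $\eta(X_3)=-1$, $X_3\lrcorner d\eta=0$; then $[X_1,X_3]=cX_1+c^2_{13}X_2$, $[X_2,X_3]=c^1_{23}X_1-cX_2$, $[X_1,X_2]=c^1_{12}X_1+c^2_{12}X_2+X_3$. $\mathfrak{g}$ has basis $e_1,\dots,e_4$ with $[e_1,e_2]=e_3$, $[e_4,e_1]=e_2$, $[e_4,e_2]=e_1$. $\mathcal{G}$ is the $SO^+_{1,1}(\mathbb{R})$-bundle of oriented orthonormal frames; a Cartan connection of type $(\mathfrak{g},\langle e_4\rangle)$ is adapted if for each local section $s=(Y_1,Y_2)$ the frame dual to $(s^*\tilde\omega_1,s^*\tilde\omega_2,s^*\tilde\omega_3)$ is $(Y_1,Y_2,E_3)$ with $E_3\equiv[Y_1,Y_2]\bmod H$. $\tilde N\subset\mathrm{Hom}(\wedge^2\langle e_1,e_2,e_3\rangle,\mathfrak{g})$ is spanned by $e_1\otimes e_1^*\wedge e_3^*\mp e_2\otimes e_2^*\wedge e_3^*$, $e_1\otimes e_2^*\wedge e_3^*$, $e_2\otimes e_1^*\wedge e_3^*$, $e_4\otimes e_1^*\wedge e_3^*$, $e_4\otimes e_2^*\wedge e_3^*$; the curvature function is $\tilde k(X,Y)=\tilde\Omega(\tilde\omega^{-1}X,\tilde\omega^{-1}Y)$.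 *)

theory Defs
  imports "HOL-Analysis.Analysis"
begin

text \<open>Local model: an open set U of the 3-manifold is an open subset of real^3.
  Vector fields are maps real^3 \<Rightarrow> real^3, (real- or g-component-) 1-forms are maps
  p \<mapsto> (linear functional on real^3), 2-forms are maps p \<mapsto> (bilinear form).\<close>

coinductive smooth_on :: "(real^3) set \<Rightarrow> (real^3 \<Rightarrow> 'b::real_normed_vector) \<Rightarrow> bool" where
  "f differentiable_on U \<Longrightarrow> (\<forall>v. smooth_on U (\<lambda>p. frechet_derivative f (at p) v))
     \<Longrightarrow> smooth_on U f"

definition lie :: "(real^3 \<Rightarrow> real^3) \<Rightarrow> (real^3 \<Rightarrow> real^3) \<Rightarrow> real^3 \<Rightarrow> real^3" where
  "lie X Y p = frechet_derivative Y (at p) (X p) - frechet_derivative X (at p) (Y p)"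

definition vder :: "(real^3 \<Rightarrow> real^3) \<Rightarrow> (real^3 \<Rightarrow> real) \<Rightarrow> real^3 \<Rightarrow> real" where
  "vder X f p = frechet_derivative f (at p) (X p)"

text \<open>Exterior derivative of a 1-form (coordinate formula with constant vectors u, v)\<close>
definition d1 :: "(real^3 \<Rightarrow> real^3 \<Rightarrow> real) \<Rightarrow> real^3 \<Rightarrow> real^3 \<Rightarrow> real^3 \<Rightarrow> real" where
  "d1 \<alpha> p u v = frechet_derivative (\<lambda>q. \<alpha> q v) (at p) u - frechet_derivative (\<lambda>q. \<alpha> q u) (at p) v"

definition wedge :: "(real^3 \<Rightarrow> real^3 \<Rightarrow> real) \<Rightarrow> (real^3 \<Rightarrow> real^3 \<Rightarrow> real) \<Rightarrow> real^3 \<Rightarrow> real^3 \<Rightarrow> real^3 \<Rightarrow> real" where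
  "wedge \<alpha> \<beta> p u v = \<alpha> p u * \<beta> p v - \<alpha> p v * \<beta> p u"

text \<open>The Lie algebra g: elements are coefficient functions x :: nat \<Rightarrow> real w.r.t. the basis
  e_1,...,e_4 (only indices 1..4 matter). ebr i j k = k-th coefficient of [e_i,e_j], where
  [e_1,e_2]=e_3, [e_4,e_1]=e_2, [e_4,e_2]=e_1 and all other brackets of basis elements vanish
  (up to antisymmetry).\<close>
definition ebr :: "nat \<Rightarrow> nat \<Rightarrow> nat \<Rightarrow> real" where
  "ebr i j k =
     (if (i,j,k) = (1,2,3) then 1 else if (i,j,k) = (2,1,3) then -1
      else if (i,j,k) = (4,1,2) then 1 else if (i,j,k) = (1,4,2) then -1
      else if (i,j,k) = (4,2,1) then 1 else if (i,j,k) = (2,4,1) then -1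
      else 0)"

definition gbr :: "(nat \<Rightarrow> real) \<Rightarrow> (nat \<Rightarrow> real) \<Rightarrow> nat \<Rightarrow> real" where
  "gbr x y k = (\<Sum>i\<in>{1..4}. \<Sum>j\<in>{1..4}. x i * y j * ebr i j k)"

text \<open>A g-valued 1-form is given by its components \<omega> k (k = 1..4), \<omega> = sum_k e_k \<otimes> \<omega> k.
  Curvature \<Omega> = d\<omega> + 1/2[\<omega>,\<omega>], where 1/2[\<omega>,\<omega>](u,v) = [\<omega>(u),\<omega>(v)]; k-th component:\<close>
definition curv :: "(nat \<Rightarrow> real^3 \<Rightarrow> real^3 \<Rightarrow> real) \<Rightarrow> nat \<Rightarrow> real^3 \<Rightarrow> real^3 \<Rightarrow> real^3 \<Rightarrow> real" where
  "curv \<omega> k p u v = d1 (\<omega> k) p u v + gbr (\<lambda>j. \<omega> j p u) (\<lambda>j. \<omega> j p v) k"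

text \<open>Elements of Hom(wedge^2 <e1,e2,e3>, g) are represented by \<phi> i j m = m-th coefficient of
  \<phi>(e_i,e_j) (i,j \<in> {1,2,3}, m \<in> {1..4}). elt k a b is e_k \<otimes> e_a^* \<and> e_b^*.\<close>
definition elt :: "nat \<Rightarrow> nat \<Rightarrow> nat \<Rightarrow> nat \<Rightarrow> nat \<Rightarrow> nat \<Rightarrow> real" where
  "elt k a b = (\<lambda>i j m. (if m = k then 1 else 0) *
       ((if i = a \<and> j = b then 1 else 0) - (if i = b \<and> j = a then 1 else 0)))"

definition Ntilde :: "(nat \<Rightarrow> nat \<Rightarrow> nat \<Rightarrow> real) set" where
  "Ntilde = {\<phi>. \<exists>a1 a2 a3 a4 a5::real. \<forall>i\<in>{1..3}. \<forall>j\<in>{1..3}. \<forall>m\<in>{1..4}.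
      \<phi> i j m = a1 * (elt 1 1 3 i j m - elt 2 2 3 i j m) + a2 * elt 1 2 3 i j m
               + a3 * elt 2 1 3 i j m + a4 * elt 4 1 3 i j m + a5 * elt 4 2 3 i j m}"

text \<open>Curvature function along the section: k(e_i,e_j) = \<Omega>(F_i,F_j), with (F_1,F_2,F_3)
  the frame dual to (\<omega>_1,\<omega>_2,\<omega>_3).\<close>
definition curvfun :: "(nat \<Rightarrow> real^3 \<Rightarrow> real^3 \<Rightarrow> real) \<Rightarrow> (nat \<Rightarrow> real^3 \<Rightarrow> real^3) \<Rightarrow> real^3
      \<Rightarrow> nat \<Rightarrow> nat \<Rightarrow> nat \<Rightarrow> real" where
  "curvfun \<omega> F p = (\<lambda>i j m. curv \<omega> m p (F i p) (F j p))"

text \<open>\<omega> is the pullback s^*\<omega>~ along s = (X1,X2) of a normal Cartan connection: a smooth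
  g-valued 1-form on U which is adapted (frame dual to (\<omega>_1,\<omega>_2,\<omega>_3) is (X1,X2,E3) with
  E3 = [X1,X2] mod H) and whose curvature function takes values in N~.\<close>
definition normal_adapted ::
  "(real^3) set \<Rightarrow> (nat \<Rightarrow> real^3 \<Rightarrow> real^3 \<Rightarrow> real) \<Rightarrow> (real^3 \<Rightarrow> real^3) \<Rightarrow> (real^3 \<Rightarrow> real^3) \<Rightarrow> bool"
  where
  "normal_adapted U \<omega> X1 X2 \<longleftrightarrow>
     (\<forall>k\<in>{1..4}. \<forall>p\<in>U. linear (\<omega> k p)) \<and>
     (\<forall>k\<in>{1..4}. \<forall>v. smooth_on U (\<lambda>p. \<omega> k p v)) \<and>
     (\<exists>E3. \<forall>p\<in>U.
        (\<forall>k\<in>{1,2,3}. \<omega> k p (X1 p) = (if k = 1 then 1 else 0)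
                     \<and> \<omega> k p (X2 p) = (if k = 2 then 1 else 0)
                     \<and> \<omega> k p (E3 p) = (if k = 3 then 1 else 0)) \<and>
        E3 p - lie X1 X2 p \<in> span {X1 p, X2 p} \<and>
        curvfun \<omega> (\<lambda>i. if i = 1 then X1 else if i = 2 then X2 else E3) p \<in> Ntilde)"

end

theory Submission
  imports Defs
begin

lemma smooth_diff: assumes "smooth_on U f" "open U" "p \<in> U" shows "f differentiable (at p)"
  using assms(1) by (cases rule: smooth_on.cases) (use assms in \<open>auto simp: differentiable_on_eq_differentiable_at\<close>)

lemma fd_transfer:
  assumes "open U" "p \<in> U" "\<And>q. q \<in> U \<Longrightarrow> f q = g q" "g differentiable (at p)"
  shows "frechet_derivative f (at p) = frechet_derivative g (at p)"
proof -
  have "(g has_derivative frechet_derivative g (at p)) (at p)" using assms(4) frechet_derivative_works by blast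
  then have "(f has_derivative frechet_derivative g (at p)) (at p)"
    by (rule has_derivative_transform_within_open[OF _ assms(1,2)]) (simp add: assms(3))
  then show ?thesis using frechet_derivative_at by metis
qed

lemma fd_const:
  assumes "open U" "p \<in> U" "\<And>q. q \<in> U \<Longrightarrow> f q = c"
  shows "frechet_derivative f (at p) h = 0"
  using fd_transfer[of U p f "\<lambda>_. c", OF assms] by simp

lemma lin_coord: assumes "linear L" shows "L (v::real^'n) = (\<Sum>i\<in>UNIV. v$i * L (axis i 1))"
proof -
  have "L v = L (\<Sum>i\<in>UNIV. v$i *\<^sub>R axis i 1)"
    using basis_expansion[of v] by (simp add: scalar_mult_eq_scaleR)
  also have "\<dots> = (\<Sum>i\<in>UNIV. v$i * L (axis i 1))"
    by (simp add: linear_sum[OF assms] linear_scale[OF assms])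
  finally show ?thesis .
qed

definition Dax :: "(real^3 \<Rightarrow> real^3 \<Rightarrow> real) \<Rightarrow> real^3 \<Rightarrow> 3 \<Rightarrow> real^3 \<Rightarrow> real" where
  "Dax \<alpha> p i = frechet_derivative (\<lambda>q. \<alpha> q (axis i 1)) (at p)"

lemma form_deriv:
  assumes "open U" "p \<in> U" "\<forall>q\<in>U. linear (\<alpha> q)" "\<And>v. (\<lambda>q. \<alpha> q v) differentiable (at p)"
  shows "((\<lambda>q. \<alpha> q v) has_derivative (\<lambda>h. \<Sum>i\<in>UNIV. v$i * Dax \<alpha> p i h)) (at p)"
proof -
  have d: "((\<lambda>q. \<alpha> q (axis i 1)) has_derivative Dax \<alpha> p i) (at p)" for i
    unfolding Dax_def using assms(4) frechet_derivative_works by blast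
  have "((\<lambda>q. \<Sum>i\<in>UNIV. v$i * \<alpha> q (axis i 1)) has_derivative (\<lambda>h. \<Sum>i\<in>UNIV. v$i * Dax \<alpha> p i h)) (at p)"
    by (intro has_derivative_sum has_derivative_mult_right d)
  then show ?thesis
    by (rule has_derivative_transform_within_open[OF _ assms(1,2)]) (use assms(3) lin_coord in metis)
qed

lemma Dax_linear:
  assumes "\<And>v. (\<lambda>q. \<alpha> q v) differentiable (at p)"
  shows "linear (Dax \<alpha> p i)"
  unfolding Dax_def using assms frechet_derivative_works has_derivative_linear by blast

lemma form_prod_deriv:
  assumes "open U" "p \<in> U" "\<forall>q\<in>U. linear (\<alpha> q)" "\<And>v. (\<lambda>q. \<alpha> q v) differentiable (at p)"
    and "(Y has_derivative DY) (at p)"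
  shows "((\<lambda>q. \<alpha> q (Y q)) has_derivative
           (\<lambda>h. \<Sum>i\<in>UNIV. DY h $ i * \<alpha> p (axis i 1) + Y p $ i * Dax \<alpha> p i h)) (at p)"
proof -
  have d: "((\<lambda>q. \<alpha> q (axis i 1)) has_derivative Dax \<alpha> p i) (at p)" for i
    unfolding Dax_def using assms(4) frechet_derivative_works by blast
  have c: "((\<lambda>q. Y q $ i) has_derivative (\<lambda>h. DY h $ i)) (at p)" for i
    by (rule bounded_linear.has_derivative[OF bounded_linear_vec_nth assms(5)])
  have "((\<lambda>q. \<Sum>i\<in>UNIV. Y q $ i * \<alpha> q (axis i 1)) has_derivative
           (\<lambda>h. \<Sum>i\<in>UNIV. Y p $ i * Dax \<alpha> p i h + DY h $ i * \<alpha> p (axis i 1))) (at p)"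
    by (intro has_derivative_sum has_derivative_mult d c)
  then have "((\<lambda>q. \<Sum>i\<in>UNIV. Y q $ i * \<alpha> q (axis i 1)) has_derivative
           (\<lambda>h. \<Sum>i\<in>UNIV. DY h $ i * \<alpha> p (axis i 1) + Y p $ i * Dax \<alpha> p i h)) (at p)"
    by (simp add: add.commute)
  then show ?thesis
    by (rule has_derivative_transform_within_open[OF _ assms(1,2)]) (use assms(3) lin_coord in metis)
qed

lemma d1_coord:
  assumes "open U" "p \<in> U" "\<forall>q\<in>U. linear (\<alpha> q)" "\<And>v. (\<lambda>q. \<alpha> q v) differentiable (at p)"
  shows "d1 \<alpha> p u v = (\<Sum>i\<in>UNIV. v$i * Dax \<alpha> p i u - u$i * Dax \<alpha> p i v)"
  unfolding d1_def
    frechet_derivative_at[OF form_deriv[OF assms, of v], symmetric] frechet_derivative_at[OF form_deriv[OF assms, of u], symmetric]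
  by (simp add: sum_subtractf)

lemma cartan:
  assumes "open U" "p \<in> U" "\<forall>q\<in>U. linear (\<alpha> q)" "\<And>v. (\<lambda>q. \<alpha> q v) differentiable (at p)"
    and "X differentiable (at p)" "Y differentiable (at p)"
  shows "d1 \<alpha> p (X p) (Y p) = frechet_derivative (\<lambda>q. \<alpha> q (Y q)) (at p) (X p)
           - frechet_derivative (\<lambda>q. \<alpha> q (X q)) (at p) (Y p) - \<alpha> p (lie X Y p)"
proof -
  have X: "(X has_derivative frechet_derivative X (at p)) (at p)" using assms(5) frechet_derivative_works by blast
  have Y: "(Y has_derivative frechet_derivative Y (at p)) (at p)" using assms(6) frechet_derivative_works by blast
  have lp: "linear (\<alpha> p)" using assms(2,3) by blast
  show ?thesis
    unfolding d1_coord[OF assms(1-4)] lie_def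
    unfolding frechet_derivative_at[OF form_prod_deriv[OF assms(1-4) X], symmetric]
      frechet_derivative_at[OF form_prod_deriv[OF assms(1-4) Y], symmetric]
    by (simp add: lin_coord[OF lp, of "_ - _"] sum_subtractf[symmetric] sum.distrib[symmetric] algebra_simps)
qed

lemma d1_expand:
  assumes "open U" "p \<in> U" "\<forall>q\<in>U. linear (\<alpha> q)" "\<And>v. (\<lambda>q. \<alpha> q v) differentiable (at p)"
  shows "d1 \<alpha> p (s1 *\<^sub>R x1 + s2 *\<^sub>R x2 + s3 *\<^sub>R x3) (t1 *\<^sub>R x1 + t2 *\<^sub>R x2 + t3 *\<^sub>R x3)
     = (s1*t2 - s2*t1) * d1 \<alpha> p x1 x2 + (s1*t3 - s3*t1) * d1 \<alpha> p x1 x3 + (s2*t3 - s3*t2) * d1 \<alpha> p x2 x3"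
proof -
  have l: "linear (Dax \<alpha> p i)" for i using Dax_linear assms(4) by blast
  show ?thesis
    unfolding d1_coord[OF assms]
    by (simp add: linear_add[OF l] linear_scale[OF l] sum_distrib_left sum_subtractf[symmetric] sum.distrib[symmetric] algebra_simps)
qed

lemma ebr_sum: "(\<Sum>i\<in>{1..4::nat}. f i) = f 1 + f 2 + f 3 + f 4"
  by (simp add: eval_nat_numeral atLeastAtMostSuc_conv ac_simps)

lemma gbr_explicit:
  "gbr x y 1 = x 4 * y 2 - x 2 * y 4" "gbr x y 2 = x 4 * y 1 - x 1 * y 4"
  "gbr x y 3 = x 1 * y 2 - x 2 * y 1" "gbr x y 4 = 0"
  unfolding gbr_def ebr_sum by (simp_all add: ebr_def)

lemma frame_span:
  fixes x1 x2 x3 :: "real^3"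
  assumes "\<forall>a b d. a *\<^sub>R x1 + b *\<^sub>R x2 + d *\<^sub>R x3 = 0 \<longrightarrow> a = 0 \<and> b = 0 \<and> d = 0"
  shows "\<exists>s1 s2 s3. v = s1 *\<^sub>R x1 + s2 *\<^sub>R x2 + s3 *\<^sub>R x3"
proof -
  define M where "M = (\<lambda>t::real^3. t$1 *\<^sub>R x1 + t$2 *\<^sub>R x2 + t$3 *\<^sub>R x3)"
  have lM: "linear M" unfolding M_def by (rule linearI) (simp_all add: algebra_simps)
  have "inj M"
  proof (rule injI)
    fix s t assume "M s = M t"
    then have "M (s - t) = 0" using linear_diff[OF lM] by simp
    then have "(s-t)$1 = 0 \<and> (s-t)$2 = 0 \<and> (s-t)$3 = 0" using assms unfolding M_def by blast
    then show "s = t" by (simp add: vec_eq_iff forall_3)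
  qed
  then have "surj M" using lM linear_injective_imp_surjective by blast
  then obtain t where "v = M t" by (metis surjD)
  then show ?thesis unfolding M_def by blast
qed

lemma span2_obtain:
  assumes "w \<in> span {x, y}"
  shows "\<exists>a b. w = a *\<^sub>R x + b *\<^sub>R y"
  using assms by (auto simp: span_insert span_singleton scalar_mult_eq_scaleR) (metis add.commute diff_add_cancel)

lemma Nt_extract:
  assumes "\<phi> \<in> Ntilde"
  shows "\<phi> 1 2 1 = 0" "\<phi> 1 2 2 = 0" "\<phi> 1 2 3 = 0" "\<phi> 1 2 4 = 0" "\<phi> 1 3 3 = 0" "\<phi> 2 3 3 = 0"
  using assms unfolding Ntilde_def by (auto simp: elt_def)

theorem mainTheorem5:
  fixes U :: "(real^3) set"
    and X1 X2 X3 :: "real^3 \<Rightarrow> real^3"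
    and c c213 c123 c112 c212 :: "real^3 \<Rightarrow> real"
    and \<theta> :: "nat \<Rightarrow> real^3 \<Rightarrow> real^3 \<Rightarrow> real"
    and \<omega> :: "nat \<Rightarrow> real^3 \<Rightarrow> real^3 \<Rightarrow> real"
  assumes U_open: "open U"
    and X_smooth: "smooth_on U X1" "smooth_on U X2" "smooth_on U X3"
    and frame: "\<forall>p\<in>U. \<forall>a b d. a *\<^sub>R X1 p + b *\<^sub>R X2 p + d *\<^sub>R X3 p = 0 \<longrightarrow> a = 0 \<and> b = 0 \<and> d = 0"
    and br13: "\<forall>p\<in>U. lie X1 X3 p = c p *\<^sub>R X1 p + c213 p *\<^sub>R X2 p"
    and br23: "\<forall>p\<in>U. lie X2 X3 p = c123 p *\<^sub>R X1 p - c p *\<^sub>R X2 p"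
    and br12: "\<forall>p\<in>U. lie X1 X2 p = c112 p *\<^sub>R X1 p + c212 p *\<^sub>R X2 p + X3 p"
    and c_smooth: "smooth_on U c" "smooth_on U c213" "smooth_on U c123"
                  "smooth_on U c112" "smooth_on U c212"
    and coframe: "\<forall>p\<in>U. \<forall>i\<in>{1,2,3}. linear (\<theta> i p)
                     \<and> \<theta> i p (X1 p) = (if i = 1 then 1 else 0)
                     \<and> \<theta> i p (X2 p) = (if i = 2 then 1 else 0)
                     \<and> \<theta> i p (X3 p) = (if i = 3 then 1 else 0)"
    and \<theta>_smooth: "\<forall>i\<in>{1,2,3}. \<forall>v. smooth_on U (\<lambda>p. \<theta> i p v)"
    and normal: "normal_adapted U \<omega> X1 X2"
  shows "let \<beta>1 = c112; \<beta>2 = (\<lambda>p. - c212 p);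
             \<beta>3 = (\<lambda>p. (c212 p)\<^sup>2 - (c112 p)\<^sup>2 - vder X1 c212 p - vder X2 c112 p)
         in (\<forall>p\<in>U. \<forall>v.
               \<omega> 1 p v = \<theta> 1 p v \<and> \<omega> 2 p v = \<theta> 2 p v \<and> \<omega> 3 p v = \<theta> 3 p v \<and>
               \<omega> 4 p v = \<beta>1 p * \<theta> 1 p v + \<beta>2 p * \<theta> 2 p v + \<beta>3 p * \<theta> 3 p v)
          \<and> (\<forall>p\<in>U. \<forall>u v.
               curv \<omega> 1 p u v = - c p * wedge (\<theta> 1) (\<theta> 3) p u v
                                 - (c123 p + \<beta>3 p) * wedge (\<theta> 2) (\<theta> 3) p u v \<and>
               curv \<omega> 2 p u v = - (c213 p + \<beta>3 p) * wedge (\<theta> 1) (\<theta> 3) p u v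
                                 + c p * wedge (\<theta> 2) (\<theta> 3) p u v \<and>
               curv \<omega> 3 p u v = 0)"
proof -
  have lw: "\<And>k q. k \<in> {1..4} \<Longrightarrow> q \<in> U \<Longrightarrow> linear (\<omega> k q)"
   and smw: "\<And>k v. k \<in> {1..4} \<Longrightarrow> smooth_on U (\<lambda>p. \<omega> k p v)"
    using normal unfolding normal_adapted_def by blast+
  from normal obtain E3 where E3: "\<forall>p\<in>U.
        (\<forall>k\<in>{1,2,3}. \<omega> k p (X1 p) = (if k = 1 then 1 else 0)
                     \<and> \<omega> k p (X2 p) = (if k = 2 then 1 else 0)
                     \<and> \<omega> k p (E3 p) = (if k = 3 then 1 else 0)) \<and>
        E3 p - lie X1 X2 p \<in> span {X1 p, X2 p} \<and>
        curvfun \<omega> (\<lambda>i. if i = 1 then X1 else if i = 2 then X2 else E3) p \<in> Ntilde"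
    unfolding normal_adapted_def by blast
  have lwq: "\<forall>q\<in>U. linear (\<omega> k q)" if "k \<in> {1..4}" for k using lw that by blast
  have dw: "\<And>v. (\<lambda>r. \<omega> k r v) differentiable (at q)" if "k \<in> {1..4}" "q \<in> U" for k q
    using smooth_diff[OF smw[OF that(1)] U_open that(2)] .
  have dX1: "X1 differentiable (at q)" and dX2: "X2 differentiable (at q)" and dX3: "X3 differentiable (at q)"
    if "q \<in> U" for q using smooth_diff[OF X_smooth(1) U_open that] smooth_diff[OF X_smooth(2) U_open that]
      smooth_diff[OF X_smooth(3) U_open that] by auto
  have cart: "d1 (\<omega> k) q (X q) (Y q) = frechet_derivative (\<lambda>r. \<omega> k r (Y r)) (at q) (X q)
           - frechet_derivative (\<lambda>r. \<omega> k r (X r)) (at q) (Y q) - \<omega> k q (lie X Y q)"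
    if "k \<in> {1..4}" "q \<in> U" "X differentiable (at q)" "Y differentiable (at q)" for k q X Y
    by (rule cartan[OF U_open that(2) lwq[OF that(1)] dw[OF that(1,2)] that(3,4)])
  have dexp: "d1 (\<omega> k) q (s1 *\<^sub>R x1 + s2 *\<^sub>R x2 + s3 *\<^sub>R x3) (t1 *\<^sub>R x1 + t2 *\<^sub>R x2 + t3 *\<^sub>R x3)
     = (s1*t2 - s2*t1) * d1 (\<omega> k) q x1 x2 + (s1*t3 - s3*t1) * d1 (\<omega> k) q x1 x3 + (s2*t3 - s3*t2) * d1 (\<omega> k) q x2 x3"
    if "k \<in> {1..4}" "q \<in> U" for k q s1 s2 s3 t1 t2 t3 x1 x2 x3
    by (rule d1_expand[OF U_open that(2) lwq[OF that(1)] dw[OF that(1,2)]])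
  have spanq: "\<exists>s1 s2 s3. v = s1 *\<^sub>R X1 q + s2 *\<^sub>R X2 q + s3 *\<^sub>R X3 q" if "q \<in> U" for q v
    using frame_span frame that by blast
  have fdc: "frechet_derivative f (at q) h = 0" if "q \<in> U" "\<And>r. r \<in> U \<Longrightarrow> f r = cc" for f q h cc
    using fd_const[OF U_open that] .
  have "\<forall>q\<in>U. \<exists>a b. E3 q = X3 q + a *\<^sub>R X1 q + b *\<^sub>R X2 q"
  proof
    fix q assume q: "q \<in> U"
    then obtain a b where "E3 q - lie X1 X2 q = a *\<^sub>R X1 q + b *\<^sub>R X2 q" using E3 span2_obtain by blast
    then have "E3 q = X3 q + (a + c112 q) *\<^sub>R X1 q + (b + c212 q) *\<^sub>R X2 q"
      using br12 q by (simp add: algebra_simps)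
    then show "\<exists>a b. E3 q = X3 q + a *\<^sub>R X1 q + b *\<^sub>R X2 q" by blast
  qed
  then obtain a b where ab: "\<And>q. q \<in> U \<Longrightarrow> E3 q = X3 q + a q *\<^sub>R X1 q + b q *\<^sub>R X2 q"
    by metis
  have wE: "\<omega> k q (X1 q) = (if k = 1 then 1 else 0) \<and> \<omega> k q (X2 q) = (if k = 2 then 1 else 0)
       \<and> \<omega> k q (E3 q) = (if k = 3 then 1 else 0)" if "k \<in> {1,2,3}" "q \<in> U" for k q
    using E3 that by blast
  have wX3: "\<omega> k q (X3 q) = (if k = 3 then 1 else 0) - a q * (if k = 1 then 1 else 0) - b q * (if k = 2 then 1 else 0)"
    if "k \<in> {1,2,3}" "q \<in> U" for k q
  proof -
    have l: "linear (\<omega> k q)" using lw that by auto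
    have "\<omega> k q (E3 q) = \<omega> k q (X3 q) + a q * \<omega> k q (X1 q) + b q * \<omega> k q (X2 q)"
      using ab[OF that(2)] by (simp add: linear_add[OF l] linear_scale[OF l])
    then show ?thesis using wE[OF that] by simp
  qed
  have ab0: "a q = 0 \<and> b q = 0" if q: "q \<in> U" for q
  proof -
    let ?F = "(\<lambda>i. if i = 1 then X1 else if i = 2 then X2 else E3)"
    have N: "curvfun \<omega> ?F q \<in> Ntilde" using E3 q by blast
    have c13: "curv \<omega> 3 q (X1 q) (E3 q) = 0" using Nt_extract(5)[OF N] unfolding curvfun_def by simp
    have c23: "curv \<omega> 3 q (X2 q) (E3 q) = 0" using Nt_extract(6)[OF N] unfolding curvfun_def by simp
    have l3: "linear (\<omega> 3 q)" using lw q by auto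
    have fd1: "frechet_derivative (\<lambda>r. \<omega> 3 r (X1 r)) (at q) h = 0" for h
      using fdc[OF q, of "\<lambda>r. \<omega> 3 r (X1 r)" 0] wE by simp
    have fd2: "frechet_derivative (\<lambda>r. \<omega> 3 r (X2 r)) (at q) h = 0" for h
      using fdc[OF q, of "\<lambda>r. \<omega> 3 r (X2 r)" 0] wE by simp
    have fd3: "frechet_derivative (\<lambda>r. \<omega> 3 r (X3 r)) (at q) h = 0" for h
      using fdc[OF q, of "\<lambda>r. \<omega> 3 r (X3 r)" 1] wX3 by simp
    have w31: "\<omega> 3 q (X1 q) = 0" and w32: "\<omega> 3 q (X2 q) = 0" and w33: "\<omega> 3 q (X3 q) = 1"
      using wE[OF _ q, of 3] wX3[OF _ q, of 3] by auto
    have d12: "d1 (\<omega> 3) q (X1 q) (X2 q) = -1"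
      using cart[of 3 q X1 X2] q dX1 dX2 fd1 fd2 br12 w31 w32 w33
      by (simp add: linear_add[OF l3] linear_scale[OF l3])
    have d13: "d1 (\<omega> 3) q (X1 q) (X3 q) = 0"
      using cart[of 3 q X1 X3] q dX1 dX3 fd1 fd3 br13 w31 w32 w33
      by (simp add: linear_add[OF l3] linear_scale[OF l3])
    have d23: "d1 (\<omega> 3) q (X2 q) (X3 q) = 0"
      using cart[of 3 q X2 X3] q dX2 dX3 fd2 fd3 br23 w31 w32 w33
      by (simp add: linear_diff[OF l3] linear_scale[OF l3])
    have d3exp: "d1 (\<omega> 3) q (s1 *\<^sub>R x1 + s2 *\<^sub>R x2 + s3 *\<^sub>R x3) (t1 *\<^sub>R x1 + t2 *\<^sub>R x2 + t3 *\<^sub>R x3)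
     = (s1*t2 - s2*t1) * d1 (\<omega> 3) q x1 x2 + (s1*t3 - s3*t1) * d1 (\<omega> 3) q x1 x3 + (s2*t3 - s3*t2) * d1 (\<omega> 3) q x2 x3"
      for s1 s2 s3 t1 t2 t3 x1 x2 x3 using dexp[of 3 q] q by simp
    have "curv \<omega> 3 q (X1 q) (E3 q) = d1 (\<omega> 3) q (X1 q) (E3 q)"
      unfolding curv_def gbr_explicit using wE[OF _ q, of 1] wE[OF _ q, of 2] by simp
    also have "\<dots> = d1 (\<omega> 3) q (1 *\<^sub>R X1 q + 0 *\<^sub>R X2 q + 0 *\<^sub>R X3 q) (a q *\<^sub>R X1 q + b q *\<^sub>R X2 q + 1 *\<^sub>R X3 q)"
      using ab[OF q] by (simp add: ac_simps)
    also have "\<dots> = - b q" by (simp only: d3exp) (simp add: d12 d13 d23)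
    finally have b0: "b q = 0" using c13 by simp
    have "curv \<omega> 3 q (X2 q) (E3 q) = d1 (\<omega> 3) q (X2 q) (E3 q)"
      unfolding curv_def gbr_explicit using wE[OF _ q, of 1] wE[OF _ q, of 2] by simp
    also have "\<dots> = d1 (\<omega> 3) q (0 *\<^sub>R X1 q + 1 *\<^sub>R X2 q + 0 *\<^sub>R X3 q) (a q *\<^sub>R X1 q + b q *\<^sub>R X2 q + 1 *\<^sub>R X3 q)"
      using ab[OF q] by (simp add: ac_simps)
    also have "\<dots> = a q" by (simp only: d3exp) (simp add: d12 d13 d23)
    finally have a0: "a q = 0" using c23 by simp
    show ?thesis using a0 b0 by simp
  qed
  have E3X3: "E3 q = X3 q" if "q \<in> U" for q using ab[OF that] ab0[OF that] by simp
  have wv: "\<omega> k q (X1 q) = (if k = 1 then 1 else 0) \<and> \<omega> k q (X2 q) = (if k = 2 then 1 else 0)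
       \<and> \<omega> k q (X3 q) = (if k = 3 then 1 else 0)" if "k \<in> {1,2,3}" "q \<in> U" for k q
    using wE[OF that] E3X3[OF that(2)] by simp
  have wth: "\<omega> k q v = \<theta> k q v" if kq: "k \<in> {1,2,3}" "q \<in> U" for k q v
  proof -
    obtain s1 s2 s3 where v: "v = s1 *\<^sub>R X1 q + s2 *\<^sub>R X2 q + s3 *\<^sub>R X3 q" using spanq[OF kq(2)] by blast
    have l: "linear (\<omega> k q)" using lw kq by auto
    have lt: "linear (\<theta> k q)" and th: "\<theta> k q (X1 q) = (if k = 1 then 1 else 0) \<and> \<theta> k q (X2 q) = (if k = 2 then 1 else 0)
       \<and> \<theta> k q (X3 q) = (if k = 3 then 1 else 0)" using coframe kq by blast+
    show ?thesis using wv[OF kq] th unfolding v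
      by (simp add: linear_add[OF l] linear_scale[OF l] linear_add[OF lt] linear_scale[OF lt])
  qed
  have thv: "\<theta> k q (s1 *\<^sub>R X1 q + s2 *\<^sub>R X2 q + s3 *\<^sub>R X3 q) = (if k = 1 then s1 else if k = 2 then s2 else s3)"
    if "k \<in> {1,2,3}" "q \<in> U" for k q s1 s2 s3
  proof -
    have lt: "linear (\<theta> k q)" and th: "\<theta> k q (X1 q) = (if k = 1 then 1 else 0) \<and> \<theta> k q (X2 q) = (if k = 2 then 1 else 0)
       \<and> \<theta> k q (X3 q) = (if k = 3 then 1 else 0)" using coframe that by blast+
    show ?thesis using th that by (auto simp add: linear_add[OF lt] linear_scale[OF lt])
  qed
  have w4: "\<omega> 4 q (s1 *\<^sub>R X1 q + s2 *\<^sub>R X2 q + s3 *\<^sub>R X3 q) = s1 * \<omega> 4 q (X1 q) + s2 * \<omega> 4 q (X2 q) + s3 * \<omega> 4 q (X3 q)"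
    if "q \<in> U" for q s1 s2 s3
  proof -
    have l: "linear (\<omega> 4 q)" using lw that by auto
    show ?thesis by (simp add: linear_add[OF l] linear_scale[OF l])
  qed
  have fdA: "frechet_derivative (\<lambda>r. \<omega> k r (X1 r)) (at q) h = 0"
   and fdB: "frechet_derivative (\<lambda>r. \<omega> k r (X2 r)) (at q) h = 0"
   and fdC: "frechet_derivative (\<lambda>r. \<omega> k r (X3 r)) (at q) h = 0"
    if "k \<in> {1,2,3}" "q \<in> U" for k q h
    using fdc[OF that(2), of "\<lambda>r. \<omega> k r (X1 r)" "if k = 1 then 1 else 0"]
      fdc[OF that(2), of "\<lambda>r. \<omega> k r (X2 r)" "if k = 2 then 1 else 0"]
      fdc[OF that(2), of "\<lambda>r. \<omega> k r (X3 r)" "if k = 3 then 1 else 0"] wv that by auto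
  have d12: "d1 (\<omega> k) q (X1 q) (X2 q) = - \<omega> k q (lie X1 X2 q)"
   and d13: "d1 (\<omega> k) q (X1 q) (X3 q) = - \<omega> k q (lie X1 X3 q)"
   and d23: "d1 (\<omega> k) q (X2 q) (X3 q) = - \<omega> k q (lie X2 X3 q)"
    if "k \<in> {1,2,3}" "q \<in> U" for k q
    using cart[of k q X1 X2] cart[of k q X1 X3] cart[of k q X2 X3] fdA[OF that] fdB[OF that] fdC[OF that]
      dX1[OF that(2)] dX2[OF that(2)] dX3[OF that(2)] that by auto
  have l12: "\<omega> k q (lie X1 X2 q) = c112 q * \<omega> k q (X1 q) + c212 q * \<omega> k q (X2 q) + \<omega> k q (X3 q)"
   and l13: "\<omega> k q (lie X1 X3 q) = c q * \<omega> k q (X1 q) + c213 q * \<omega> k q (X2 q)"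
   and l23: "\<omega> k q (lie X2 X3 q) = c123 q * \<omega> k q (X1 q) - c q * \<omega> k q (X2 q)"
    if "k \<in> {1..4}" "q \<in> U" for k q
  proof -
    have l: "linear (\<omega> k q)" using lw that by auto
    show "\<omega> k q (lie X1 X2 q) = c112 q * \<omega> k q (X1 q) + c212 q * \<omega> k q (X2 q) + \<omega> k q (X3 q)"
      using br12 that by (simp add: linear_add[OF l] linear_scale[OF l])
    show "\<omega> k q (lie X1 X3 q) = c q * \<omega> k q (X1 q) + c213 q * \<omega> k q (X2 q)"
      using br13 that by (simp add: linear_add[OF l] linear_scale[OF l])
    show "\<omega> k q (lie X2 X3 q) = c123 q * \<omega> k q (X1 q) - c q * \<omega> k q (X2 q)"
      using br23 that by (simp add: linear_diff[OF l] linear_scale[OF l])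
  qed
  have cm: "curv \<omega> m q (X1 q) (X2 q) = 0" if "m \<in> {1..4}" "q \<in> U" for m q
  proof -
    let ?F = "(\<lambda>i. if i = 1 then X1 else if i = 2 then X2 else E3)"
    have N: "curvfun \<omega> ?F q \<in> Ntilde" using E3 that by blast
    have "m = 1 \<or> m = 2 \<or> m = 3 \<or> m = 4" using that by auto
    then show ?thesis using Nt_extract[OF N] unfolding curvfun_def by auto
  qed
  have B1: "\<omega> 4 q (X1 q) = c112 q" if "q \<in> U" for q
    using cm[of 1 q] d12[of 1 q] l12[of 1 q] wv[of 1 q] wv[of 2 q] that
    unfolding curv_def gbr_explicit by simp
  have B2: "\<omega> 4 q (X2 q) = - c212 q" if "q \<in> U" for q
    using cm[of 2 q] d12[of 2 q] l12[of 2 q] wv[of 1 q] wv[of 2 q] that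
    unfolding curv_def gbr_explicit by simp
  have B3: "\<omega> 4 p (X3 p) = (c212 p)\<^sup>2 - (c112 p)\<^sup>2 - vder X1 c212 p - vder X2 c112 p" if p: "p \<in> U" for p
  proof -
    have Dc212: "(c212 has_derivative frechet_derivative c212 (at p)) (at p)"
      using smooth_diff[OF c_smooth(5) U_open p] frechet_derivative_works by blast
    have Dc112: "(c112 has_derivative frechet_derivative c112 (at p)) (at p)"
      using smooth_diff[OF c_smooth(4) U_open p] frechet_derivative_works by blast
    have "((\<lambda>r. \<omega> 4 r (X2 r)) has_derivative (\<lambda>h. - frechet_derivative c212 (at p) h)) (at p)"
      by (rule has_derivative_transform_within_open[OF has_derivative_minus[OF Dc212] U_open p]) (simp add: B2)
    then have f2: "frechet_derivative (\<lambda>r. \<omega> 4 r (X2 r)) (at p) = (\<lambda>h. - frechet_derivative c212 (at p) h)"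
      using frechet_derivative_at by metis
    have "((\<lambda>r. \<omega> 4 r (X1 r)) has_derivative frechet_derivative c112 (at p)) (at p)"
      by (rule has_derivative_transform_within_open[OF Dc112 U_open p]) (simp add: B1)
    then have f1: "frechet_derivative (\<lambda>r. \<omega> 4 r (X1 r)) (at p) = frechet_derivative c112 (at p)"
      using frechet_derivative_at by metis
    have "d1 (\<omega> 4) p (X1 p) (X2 p) = 0"
      using cm[of 4 p] p unfolding curv_def gbr_explicit by simp
    then have "0 = - frechet_derivative c212 (at p) (X1 p) - frechet_derivative c112 (at p) (X2 p)
        - (c112 p * c112 p + c212 p * (- c212 p) + \<omega> 4 p (X3 p))"
      using cart[of 4 p X1 X2] p dX1[OF p] dX2[OF p] f1 f2 l12[of 4 p] B1[OF p] B2[OF p] by simp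
    then show ?thesis unfolding vder_def power2_eq_square by linarith
  qed
  have main: "\<omega> 1 p v = \<theta> 1 p v \<and> \<omega> 2 p v = \<theta> 2 p v \<and> \<omega> 3 p v = \<theta> 3 p v \<and>
               \<omega> 4 p v = c112 p * \<theta> 1 p v + (- c212 p) * \<theta> 2 p v
                 + ((c212 p)\<^sup>2 - (c112 p)\<^sup>2 - vder X1 c212 p - vder X2 c112 p) * \<theta> 3 p v"
    if p: "p \<in> U" for p v
  proof -
    obtain s1 s2 s3 where v: "v = s1 *\<^sub>R X1 p + s2 *\<^sub>R X2 p + s3 *\<^sub>R X3 p" using spanq[OF p] by blast
    show ?thesis using wth[OF _ p] thv[OF _ p] w4[OF p] B1[OF p] B2[OF p] B3[OF p] unfolding v
      by (simp add: algebra_simps)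
  qed
  have main2: "curv \<omega> 1 p u v = - c p * wedge (\<theta> 1) (\<theta> 3) p u v
                                 - (c123 p + ((c212 p)\<^sup>2 - (c112 p)\<^sup>2 - vder X1 c212 p - vder X2 c112 p)) * wedge (\<theta> 2) (\<theta> 3) p u v \<and>
               curv \<omega> 2 p u v = - (c213 p + ((c212 p)\<^sup>2 - (c112 p)\<^sup>2 - vder X1 c212 p - vder X2 c112 p)) * wedge (\<theta> 1) (\<theta> 3) p u v
                                 + c p * wedge (\<theta> 2) (\<theta> 3) p u v \<and>
               curv \<omega> 3 p u v = 0"
    if p: "p \<in> U" for p u v
  proof -
    obtain s1 s2 s3 where u: "u = s1 *\<^sub>R X1 p + s2 *\<^sub>R X2 p + s3 *\<^sub>R X3 p" using spanq[OF p] by blast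
    obtain t1 t2 t3 where v: "v = t1 *\<^sub>R X1 p + t2 *\<^sub>R X2 p + t3 *\<^sub>R X3 p" using spanq[OF p] by blast
    have dd: "d1 (\<omega> k) p u v = (s1*t2 - s2*t1) * d1 (\<omega> k) p (X1 p) (X2 p)
       + (s1*t3 - s3*t1) * d1 (\<omega> k) p (X1 p) (X3 p) + (s2*t3 - s3*t2) * d1 (\<omega> k) p (X2 p) (X3 p)"
      if "k \<in> {1..4}" for k unfolding u v by (rule dexp[OF that p])
    have dd1: "d1 (\<omega> 1) p u v = (s1*t2 - s2*t1) * d1 (\<omega> 1) p (X1 p) (X2 p)
       + (s1*t3 - s3*t1) * d1 (\<omega> 1) p (X1 p) (X3 p) + (s2*t3 - s3*t2) * d1 (\<omega> 1) p (X2 p) (X3 p)"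
      by (rule dd) simp
    have dd2: "d1 (\<omega> 2) p u v = (s1*t2 - s2*t1) * d1 (\<omega> 2) p (X1 p) (X2 p)
       + (s1*t3 - s3*t1) * d1 (\<omega> 2) p (X1 p) (X3 p) + (s2*t3 - s3*t2) * d1 (\<omega> 2) p (X2 p) (X3 p)"
      by (rule dd) simp
    have dd3: "d1 (\<omega> 3) p u v = (s1*t2 - s2*t1) * d1 (\<omega> 3) p (X1 p) (X2 p)
       + (s1*t3 - s3*t1) * d1 (\<omega> 3) p (X1 p) (X3 p) + (s2*t3 - s3*t2) * d1 (\<omega> 3) p (X2 p) (X3 p)"
      by (rule dd) simp
    have o1: "\<omega> 1 p u = s1" "\<omega> 2 p u = s2" "\<omega> 3 p u = s3"
         "\<omega> 1 p v = t1" "\<omega> 2 p v = t2" "\<omega> 3 p v = t3"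
      using wth[OF _ p] thv[OF _ p] unfolding u v by simp_all
    have t1: "\<theta> 1 p u = s1" "\<theta> 2 p u = s2" "\<theta> 3 p u = s3"
         "\<theta> 1 p v = t1" "\<theta> 2 p v = t2" "\<theta> 3 p v = t3"
      using thv[OF _ p] unfolding u v by simp_all
    have o4: "\<omega> 4 p u = s1 * c112 p - s2 * c212 p + s3 * \<omega> 4 p (X3 p)"
         "\<omega> 4 p v = t1 * c112 p - t2 * c212 p + t3 * \<omega> 4 p (X3 p)"
      using w4[OF p] B1[OF p] B2[OF p] unfolding u v by simp_all
    have dv1: "d1 (\<omega> 1) p (X1 p) (X2 p) = - c112 p" "d1 (\<omega> 1) p (X1 p) (X3 p) = - c p"
              "d1 (\<omega> 1) p (X2 p) (X3 p) = - c123 p"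
      using d12[of 1 p] d13[of 1 p] d23[of 1 p] l12[of 1 p] l13[of 1 p] l23[of 1 p] wv[of 1 p] p by simp_all
    have dv2: "d1 (\<omega> 2) p (X1 p) (X2 p) = - c212 p" "d1 (\<omega> 2) p (X1 p) (X3 p) = - c213 p"
              "d1 (\<omega> 2) p (X2 p) (X3 p) = c p"
      using d12[of 2 p] d13[of 2 p] d23[of 2 p] l12[of 2 p] l13[of 2 p] l23[of 2 p] wv[of 2 p] p by simp_all
    have dv3: "d1 (\<omega> 3) p (X1 p) (X2 p) = - 1" "d1 (\<omega> 3) p (X1 p) (X3 p) = 0"
              "d1 (\<omega> 3) p (X2 p) (X3 p) = 0"
      using d12[of 3 p] d13[of 3 p] d23[of 3 p] l12[of 3 p] l13[of 3 p] l23[of 3 p] wv[of 3 p] p by simp_all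
    show ?thesis
      unfolding curv_def gbr_explicit wedge_def
      unfolding dd1 dd2 dd3 o1 t1 o4 dv1 dv2 dv3 B3[OF p, symmetric]
      by (simp add: algebra_simps)
  qed
  show ?thesis unfolding Let_def using main main2 by simp
qed

end
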